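(* Let $(\mathsf{X},\mathcal{X})$ and $(\mathsf{Y},\mathcal{Y})$ be measurable spaces and let $\mathsf{Z}\subseteq\mathsf{X}\times\mathsf{Y}$ be a complete separable metric space with a bounded metric $\rho$, endowed with its Borel $\sigma$-algebra $\mathfrak{B}(\mathsf{Z})$. Let $\mathrm{pr}_\mathsf{X}:\mathsf{Z}\to\mathsf{X}$, $\mathrm{pr}_\mathsf{Y}:\mathsf{Z}\to\mathsf{Y}$ be the projections, and assume $\mathrm{pr}_\mathsf{X}^{-1}(\mathrm{pr}_\mathsf{X}(\mathsf{Z})\cap\mathcal{X})\subseteq\mathfrak{B}(\mathsf{Z})$ and $\mathrm{pr}_\mathsf{Y}^{-1}(\mathrm{pr}_\mathsf{Y}(\mathsf{Z})\cap\mathcal{Y})\subseteq\mathfrak{B}(\mathsf{Z})$. Let $\{Z_n\}_{n\ge0}$ be a temporally homogeneous Markov chain on $\mathsf{Z}$ with one-step transition kernel $\mathcal{P}(z,\mathrm{d}\bar z)$. Assume: (A1) $\mathsf{Y}\subseteq\mathbb{R}$, $\mathcal{Y}=\mathfrak{B}(\mathbb{R})\cap\mathsf{Y}$, and $\mathscr{H}\subseteq\mathsf{Y}^{\mathsf{X}}$ is a totally bounded metric space with metric $\rho_\mathscr{H}$; (A2) $\ell:\mathsf{Y}\times\mathsf{Y}\to[0,\infty)$ is measurable and, writing $\ell_h(z):=\ell(h(\mathrm{pr}_\mathsf{X}(z)),\mathrm{pr}_\mathsf{Y}(z))$ for $h\in\mathscr{H}$, there are $L,\bar L\ge0$ with $|\ell_{h_1}(z_1)-\ell_{h_2}(z_2)|\le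 L\rho(z_1,z_2)+\bar L\rho_\mathscr{H}(h_1,h_2)$ for all $z_1,z_2\in\mathsf{Z}$, $h_1,h_2\in\mathscr{H}$; (A3) $\mathsf{Y}$ is bounded and there is $\eta\in(0,1)$ such that $\mathscr{W}(\mathcal{P}(z_1,\cdot),\mathcal{P}(z_2,\cdot))\le(1-\eta)\rho(z_1,z_2)$ for all $z_1,z_2\in\mathsf{Z}$. Let $\pi$ be the (unique) invariant probability measure of $\{Z_n\}_{n\ge0}$ and let $C_1,C_2>0$ be constants such that $\mathscr{W}(\mathcal{P}^n(z,\cdot),\pi)\le C_1\mathrm{e}^{-C_2n}$ for all $z\in\mathsf{Z}$ and $n\ge0$ (such $\pi$, $C_1$, $C_2$ exist under (A3)). Fix $\varepsilon>0$, $\delta\in(0,1)$ and an $\varepsilon$-ASEM algorithm $\mathcal{A}^\varepsilon$ for $\mathscr{H}$. Then for any initial distribution $\mu$ of $\{Z_n\}_{n\ge0}$, $$\mathbb{P}_\mu\Big(\big|\mathrm{er}_\pi\big(\mathcal{A}^\varepsilon(Z_0,\dots,Z_{n-1})\big)-\mathrm{opt}_\pi(\mathscr{H})\big|<5\varepsilon\Big)\ge1-\delta\qquad\text{for all } n\ge n_1(\varepsilon,\delta),$$ where $$n_1(\varepsilon,\delta):=\max\left\{\frac{16C_1L}{\varepsilon(1-\mathrm{e}^{-C_2})},\ \frac{128C_1^2L^2\ln\frac{\mathcal{N}(\varepsilon/4\bar L,\mathscr{H},\rho_\mathscr{H})}{\delta}}{\varepsilon^2(1-\mathrm{e}^{-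C_2})^2}\right\}.$$
   Context: The Markov chain is understood as a family $(\Omega,\mathcal{F},\mathbb{P}_z,\{Z_n\}_{n\ge0})_{z\in\mathsf{Z}}$ with $\mathbb{P}_z(Z_0=z)=1$; for a probability measure $\mu$ on $\mathsf{Z}$, $\mathbb{P}_\mu:=\int\mathbb{P}_z\,\mu(\mathrm{d}z)$. $\mathcal{P}^n$ is the $n$-step kernel. Total boundedness means: for each $\epsilon>0$ there is a finite $\mathscr{H}_\epsilon\subseteq\mathscr{H}$ such that every $h\in\mathscr{H}$ has some $h_\epsilon\in\mathscr{H}_\epsilon$ with $\rho_\mathscr{H}(h,h_\epsilon)<\epsilon$ (an $\epsilon$-covering); $\mathcal{N}(\epsilon,\mathscr{H},\rho_\mathscr{H})$ is the minimal cardinality of such an $\epsilon$-covering. $\mathscr{W}$ is the $L^1$-Wasserstein distance on probability measures on $\mathsf{Z}$: $\mathscr{W}(\mu_1,\mu_2)=\inf_{\Pi}\int\rho(z,\bar z)\,\Pi(\mathrm{d}z,\mathrm{d}\bar z)$, infimum over couplings $\Pi$ of $\mu_1,\mu_2$. Notation: $\mathrm{er}_\pi(h):=\int\ell_h\,\mathrm{d}\pi$, $\mathrm{opt}_\pi(\mathscr{H}):=\inf_{h\in\mathscr{H}}\mathrm{er}_\pi(h)$. For $\varepsilon>0$, an $\varepsilon$-ASEM (approximate sample error minimization) algorithm for $\mathscr{H}$ is a map $\mathcal{A}^\varepsilon:\bigcup_{n\ge1}\mathsf{Z}^n\to\mathscr{H}$ such that for all $n$ and $z_0,\dots,z_{n-1}\in\mathsf{Z}$,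 $\frac1n\sum_{i=0}^{n-1}\ell_{\mathcal{A}^\varepsilon(z_0,\dots,z_{n-1})}(z_i)<\inf_{h\in\mathscr{H}}\frac1n\sum_{i=0}^{n-1}\ell_h(z_i)+\varepsilon$. *)

theory Defs
  imports "HOL-Probability.Probability"
begin

definition borel_of_top :: "'a topology \<Rightarrow> 'a measure" where
  "borel_of_top T = sigma (topspace T) {U. openin T U}"

definition couplings :: "'a measure \<Rightarrow> 'a measure \<Rightarrow> 'a measure \<Rightarrow> ('a \<times> 'a) measure set" where
  "couplings S m1 m2 = {Q. prob_space Q \<and> sets Q = sets (S \<Otimes>\<^sub>M S)
      \<and> distr Q S fst = m1 \<and> distr Q S snd = m2}"

definition wasserstein :: "'a measure \<Rightarrow> ('a \<Rightarrow> 'a \<Rightarrow> real) \<Rightarrow> 'a measure \<Rightarrow> 'a measure \<Rightarrow> ennreal" where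
  "wasserstein S \<rho> m1 m2 = (INF Q\<in>couplings S m1 m2. \<integral>\<^sup>+ p. ennreal (\<rho> (fst p) (snd p)) \<partial>Q)"

fun kernel_pow :: "'a measure \<Rightarrow> ('a \<Rightarrow> 'a measure) \<Rightarrow> nat \<Rightarrow> 'a \<Rightarrow> 'a measure" where
  "kernel_pow S K 0 z = return S z"
| "kernel_pow S K (Suc n) z = bind (kernel_pow S K n z) K"

(* joint law of (Z_0,...,Z_{n-1}) under P_mu, as a measure on PiM {..<n} *)
fun chain_law :: "'a measure \<Rightarrow> ('a \<Rightarrow> 'a measure) \<Rightarrow> 'a measure \<Rightarrow> nat \<Rightarrow> (nat \<Rightarrow> 'a) measure" where
  "chain_law S K \<mu> 0 = return (PiM {} (\<lambda>_. S)) (\<lambda>_. undefined)"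
| "chain_law S K \<mu> (Suc n) = bind (chain_law S K \<mu> n)
     (\<lambda>\<omega>. distr (if n = 0 then \<mu> else K (\<omega> (n - 1))) (PiM {..<Suc n} (\<lambda>_. S)) (fun_upd \<omega> n))"

(* covering number N(r, H, d); radius in ereal so that r = \<infinity> is allowed *)
definition covering_number :: "('h \<Rightarrow> 'h \<Rightarrow> real) \<Rightarrow> 'h set \<Rightarrow> ereal \<Rightarrow> nat" where
  "covering_number d H r = (LEAST k. \<exists>F. finite F \<and> F \<subseteq> H \<and> card F = k
      \<and> (\<forall>h\<in>H. \<exists>g\<in>F. ereal (d h g) < r))"

definition loss_h :: "(real \<Rightarrow> real \<Rightarrow> real) \<Rightarrow> ('x \<Rightarrow> real) \<Rightarrow> 'x \<times> real \<Rightarrow> real" where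
  "loss_h lo h z = lo (h (fst z)) (snd z)"

definition er :: "('x \<times> real) measure \<Rightarrow> (real \<Rightarrow> real \<Rightarrow> real) \<Rightarrow> ('x \<Rightarrow> real) \<Rightarrow> real" where
  "er \<pi> lo h = (\<integral>z. loss_h lo h z \<partial>\<pi>)"

definition opt :: "('x \<times> real) measure \<Rightarrow> (real \<Rightarrow> real \<Rightarrow> real) \<Rightarrow> ('x \<Rightarrow> real) set \<Rightarrow> real" where
  "opt \<pi> lo H = (INF h\<in>H. er \<pi> lo h)"

definition ASEM :: "real \<Rightarrow> ('x \<times> real) set \<Rightarrow> (real \<Rightarrow> real \<Rightarrow> real) \<Rightarrow> ('x \<Rightarrow> real) set
     \<Rightarrow> (('x \<times> real) list \<Rightarrow> ('x \<Rightarrow> real)) \<Rightarrow> bool" where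
  "ASEM \<epsilon> Zs lo H A \<longleftrightarrow> (\<forall>zs. zs \<noteq> [] \<and> set zs \<subseteq> Zs \<longrightarrow>
      A zs \<in> H \<and>
      (\<Sum>z\<leftarrow>zs. loss_h lo (A zs) z) / real (length zs)
        < (INF h\<in>H. (\<Sum>z\<leftarrow>zs. loss_h lo h z) / real (length zs)) + \<epsilon>)"

end

theory Submission
  imports Defs
begin


locale mchain =
  fixes S :: "'a measure" and K :: "'a \<Rightarrow> 'a measure" and \<mu> :: "'a measure"
  assumes K[measurable]: "K \<in> S \<rightarrow>\<^sub>M prob_algebra S"
    and \<mu>: "\<mu> \<in> space (prob_algebra S)"
begin

lemma step_kernel:
  "(\<lambda>\<omega>. distr (if m = 0 then \<mu> else K (\<omega> (m - 1))) (PiM {..<Suc m} (\<lambda>_. S)) (fun_upd \<omega> m))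
     \<in> PiM {..<m} (\<lambda>_. S) \<rightarrow>\<^sub>M prob_algebra (PiM {..<Suc m} (\<lambda>_. S))"
proof (rule measurable_distr_prob_space2)
  show "(\<lambda>\<omega>. if m = 0 then \<mu> else K (\<omega> (m - 1))) \<in> PiM {..<m} (\<lambda>_. S) \<rightarrow>\<^sub>M prob_algebra S"
  proof (cases "m = 0")
    case True then show ?thesis using \<mu> by simp
  next
    case False
    have "(\<lambda>\<omega>. \<omega> (m - 1)) \<in> PiM {..<m} (\<lambda>_. S) \<rightarrow>\<^sub>M S"
      using False by (intro measurable_component_singleton) auto
    then have "(\<lambda>\<omega>. K (\<omega> (m - 1))) \<in> PiM {..<m} (\<lambda>_. S) \<rightarrow>\<^sub>M prob_algebra S"
      by (rule measurable_compose) (rule K)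
    then show ?thesis using False by simp
  qed
  show "(\<lambda>(x, y). x(m := y)) \<in> PiM {..<m} (\<lambda>_. S) \<Otimes>\<^sub>M S \<rightarrow>\<^sub>M PiM {..<Suc m} (\<lambda>_. S)"
    using measurable_add_dim[of m "{..<m}" "\<lambda>_. S"] by (simp add: lessThan_Suc)
qed

lemma chain_law_space: "chain_law S K \<mu> m \<in> space (prob_algebra (PiM {..<m} (\<lambda>_. S)))"
proof (induction m)
  case 0
  show ?case by (simp add: space_prob_algebra prob_space_return)
next
  case (Suc m)
  show ?case
    using prob_space_bind'[OF Suc step_kernel[of m]] sets_bind'[OF Suc step_kernel[of m]]
    by (simp add: space_prob_algebra)
qed

lemma sets_chain_law[measurable_cong]: "sets (chain_law S K \<mu> m) = sets (PiM {..<m} (\<lambda>_. S))"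
  using chain_law_space by (simp add: space_prob_algebra)

lemma space_chain_law: "space (chain_law S K \<mu> m) = space (PiM {..<m} (\<lambda>_. S))"
  using sets_chain_law by (rule sets_eq_imp_space_eq)

lemma prob_space_chain_law: "prob_space (chain_law S K \<mu> m)"
  using chain_law_space by (simp add: space_prob_algebra)

lemma nn_integral_chain_law_Suc:
  assumes F: "F \<in> borel_measurable (PiM {..<Suc m} (\<lambda>_. S))"
  shows "(\<integral>\<^sup>+\<omega>. F \<omega> \<partial>chain_law S K \<mu> (Suc m))
     = (\<integral>\<^sup>+\<omega>. (\<integral>\<^sup>+z. F (fun_upd \<omega> m z) \<partial>(if m = 0 then \<mu> else K (\<omega> (m - 1)))) \<partial>chain_law S K \<mu> m)"
proof -
  let ?N = "\<lambda>\<omega>. distr (if m = 0 then \<mu> else K (\<omega> (m - 1))) (PiM {..<Suc m} (\<lambda>_. S)) (fun_upd \<omega> m)"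
  have N: "?N \<in> chain_law S K \<mu> m \<rightarrow>\<^sub>M subprob_algebra (PiM {..<Suc m} (\<lambda>_. S))"
    using measurable_prob_algebraD[OF step_kernel[of m]]
    by (simp add: measurable_cong_sets[OF sets_chain_law refl])
  have "(\<integral>\<^sup>+\<omega>. F \<omega> \<partial>chain_law S K \<mu> (Suc m)) = (\<integral>\<^sup>+\<omega>. (\<integral>\<^sup>+y. F y \<partial>?N \<omega>) \<partial>chain_law S K \<mu> m)"
    by (simp only: chain_law.simps) (rule nn_integral_bind[OF F N])
  also have "\<dots> = (\<integral>\<^sup>+\<omega>. (\<integral>\<^sup>+z. F (fun_upd \<omega> m z) \<partial>(if m = 0 then \<mu> else K (\<omega> (m - 1)))) \<partial>chain_law S K \<mu> m)"
  proof (rule nn_integral_cong)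
    fix \<omega> assume \<omega>: "\<omega> \<in> space (chain_law S K \<mu> m)"
    then have \<omega>': "\<omega> \<in> space (PiM {..<m} (\<lambda>_. S))" by (simp add: space_chain_law)
    have sK: "sets (if m = 0 then \<mu> else K (\<omega> (m - 1))) = sets S"
    proof (cases "m = 0")
      case True then show ?thesis using \<mu> unfolding space_prob_algebra by simp
    next
      case False
      have "\<omega> (m - 1) \<in> space S" using \<omega>' False unfolding space_PiM PiE_def Pi_def by simp
      then have "K (\<omega> (m - 1)) \<in> space (prob_algebra S)" by (rule measurable_space[OF K])
      then show ?thesis using False by (simp add: space_prob_algebra)
    qed
    have T: "fun_upd \<omega> m \<in> (if m = 0 then \<mu> else K (\<omega> (m - 1))) \<rightarrow>\<^sub>M PiM {..<Suc m} (\<lambda>_. S)"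
      using measurable_Pair2[OF measurable_add_dim[of m "{..<m}" "\<lambda>_. S"] \<omega>']
      by (simp add: measurable_cong_sets[OF sK refl] lessThan_Suc)
    show "(\<integral>\<^sup>+y. F y \<partial>?N \<omega>) = (\<integral>\<^sup>+z. F (fun_upd \<omega> m z) \<partial>(if m = 0 then \<mu> else K (\<omega> (m - 1))))"
      by (rule nn_integral_distr[OF T]) (simp add: F)
  qed
  finally show ?thesis .
qed

lemma prod_bound:
  fixes \<psi> :: "nat \<Rightarrow> 'a \<Rightarrow> 'a \<Rightarrow> ennreal"
  assumes \<psi>m: "\<And>j. (\<lambda>(x, y). \<psi> j x y) \<in> borel_measurable (S \<Otimes>\<^sub>M S)"
    and \<psi>b: "\<And>j x. x \<in> space S \<Longrightarrow> (\<integral>\<^sup>+y. \<psi> j x y \<partial>K x) \<le> \<beta>"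
    and m: "1 \<le> m"
  shows "(\<integral>\<^sup>+\<omega>. (\<Prod>j\<in>{1..<m}. \<psi> j (\<omega> (j - 1)) (\<omega> j)) \<partial>chain_law S K \<mu> m) \<le> \<beta> ^ (m - 1)"
  using m
proof (induction m rule: dec_induct)
  case base
  interpret prob_space "chain_law S K \<mu> 1" by (rule prob_space_chain_law)
  show ?case using emeasure_space_1 by (simp del: chain_law.simps)
next
  case (step m)
  have comp: "(\<lambda>\<omega>. \<omega> i) \<in> PiM {..<k} (\<lambda>_. S) \<rightarrow>\<^sub>M S" if "i < k" for i k :: nat
    using that by (intro measurable_component_singleton) auto
  have \<psi>c: "(\<lambda>\<omega>. \<psi> j (\<omega> (j - 1)) (\<omega> j)) \<in> borel_measurable (PiM {..<k} (\<lambda>_. S))"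
    if "j < k" for j k
  proof -
    have "(\<lambda>\<omega>. (\<omega> (j - 1), \<omega> j)) \<in> PiM {..<k} (\<lambda>_. S) \<rightarrow>\<^sub>M S \<Otimes>\<^sub>M S"
      using that by (intro measurable_Pair comp) auto
    from measurable_compose[OF this \<psi>m[of j]] show ?thesis by simp
  qed
  have Pm: "(\<lambda>\<omega>. \<Prod>j\<in>{1..<k}. \<psi> j (\<omega> (j - 1)) (\<omega> j)) \<in> borel_measurable (PiM {..<k} (\<lambda>_. S))" for k
    by (intro borel_measurable_prod_ennreal \<psi>c) auto
  let ?P = "\<lambda>\<omega>. \<Prod>j\<in>{1..<m}. \<psi> j (\<omega> (j - 1)) (\<omega> j)"
  have "(\<integral>\<^sup>+\<omega>. (\<Prod>j\<in>{1..<Suc m}. \<psi> j (\<omega> (j - 1)) (\<omega> j)) \<partial>chain_law S K \<mu> (Suc m))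
    = (\<integral>\<^sup>+\<omega>. (\<integral>\<^sup>+z. (\<Prod>j\<in>{1..<Suc m}. \<psi> j ((fun_upd \<omega> m z) (j - 1)) ((fun_upd \<omega> m z) j))
         \<partial>(if m = 0 then \<mu> else K (\<omega> (m - 1)))) \<partial>chain_law S K \<mu> m)"
    by (rule nn_integral_chain_law_Suc[OF Pm])
  also have "\<dots> = (\<integral>\<^sup>+\<omega>. ?P \<omega> * (\<integral>\<^sup>+z. \<psi> m (\<omega> (m - 1)) z \<partial>K (\<omega> (m - 1))) \<partial>chain_law S K \<mu> m)"
  proof (rule nn_integral_cong)
    fix \<omega> assume \<omega>: "\<omega> \<in> space (chain_law S K \<mu> m)"
    then have \<omega>': "\<omega> \<in> space (PiM {..<m} (\<lambda>_. S))" by (simp add: space_chain_law)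
    have x: "\<omega> (m - 1) \<in> space S" using \<omega>' step(1) unfolding space_PiM PiE_def Pi_def by simp
    have sK: "sets (K (\<omega> (m - 1))) = sets S"
      using measurable_space[OF K x] by (simp add: space_prob_algebra)
    have meas: "\<psi> m (\<omega> (m - 1)) \<in> borel_measurable (K (\<omega> (m - 1)))"
      using measurable_Pair2[OF \<psi>m[of m] x] unfolding measurable_cong_sets[OF sK refl] by simp
    have eq: "(\<Prod>j\<in>{1..<Suc m}. \<psi> j ((fun_upd \<omega> m z) (j - 1)) ((fun_upd \<omega> m z) j))
        = ?P \<omega> * \<psi> m (\<omega> (m - 1)) z" for z
    proof -
      have "{1..<Suc m} = insert m {1..<m}" using step(1) by auto
      then have "(\<Prod>j\<in>{1..<Suc m}. \<psi> j ((fun_upd \<omega> m z) (j - 1)) ((fun_upd \<omega> m z) j))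
          = \<psi> m ((fun_upd \<omega> m z) (m - 1)) ((fun_upd \<omega> m z) m) *
            (\<Prod>j\<in>{1..<m}. \<psi> j ((fun_upd \<omega> m z) (j - 1)) ((fun_upd \<omega> m z) j))"
        by simp
      also have "(\<Prod>j\<in>{1..<m}. \<psi> j ((fun_upd \<omega> m z) (j - 1)) ((fun_upd \<omega> m z) j)) = ?P \<omega>"
        by (intro prod.cong) auto
      moreover have "m - 1 \<noteq> m" using step(1) by simp
      ultimately show ?thesis by (simp add: mult.commute)
    qed
    show "(\<integral>\<^sup>+z. (\<Prod>j\<in>{1..<Suc m}. \<psi> j ((fun_upd \<omega> m z) (j - 1)) ((fun_upd \<omega> m z) j))
         \<partial>(if m = 0 then \<mu> else K (\<omega> (m - 1))))
       = ?P \<omega> * (\<integral>\<^sup>+z. \<psi> m (\<omega> (m - 1)) z \<partial>K (\<omega> (m - 1)))"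
      using step(1) by (simp only: eq if_not_P[of "m = 0"] not_one_le_zero)
        (rule nn_integral_cmult[OF meas])
  qed
  also have "\<dots> \<le> (\<integral>\<^sup>+\<omega>. ?P \<omega> * \<beta> \<partial>chain_law S K \<mu> m)"
  proof (rule nn_integral_mono)
    fix \<omega> assume \<omega>: "\<omega> \<in> space (chain_law S K \<mu> m)"
    then have \<omega>': "\<omega> \<in> space (PiM {..<m} (\<lambda>_. S))" by (simp add: space_chain_law)
    have x: "\<omega> (m - 1) \<in> space S" using \<omega>' step(1) unfolding space_PiM PiE_def Pi_def by simp
    show "?P \<omega> * (\<integral>\<^sup>+z. \<psi> m (\<omega> (m - 1)) z \<partial>K (\<omega> (m - 1))) \<le> ?P \<omega> * \<beta>"
      by (intro mult_left_mono \<psi>b x) auto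
  qed
  also have "\<dots> = (\<integral>\<^sup>+\<omega>. ?P \<omega> \<partial>chain_law S K \<mu> m) * \<beta>"
    by (rule nn_integral_multc) (simp only: measurable_cong_sets[OF sets_chain_law refl] Pm)
  also have "\<dots> \<le> \<beta> ^ (m - 1) * \<beta>"
    by (intro mult_right_mono step(3)) auto
  also have "\<dots> = \<beta> ^ (Suc m - 1)"
    using step(1) by (cases m) (auto simp: mult.commute)
  finally show ?case .
qed

lemma kernel_pow_meas: "kernel_pow S K k \<in> S \<rightarrow>\<^sub>M prob_algebra S"
proof (induction k)
  case 0
  have "kernel_pow S K 0 = return S" by (rule ext) simp
  then show ?case by simp
next
  case (Suc k)
  have "kernel_pow S K (Suc k) = (\<lambda>z. bind (kernel_pow S K k z) K)" by (rule ext) simp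
  then show ?case using measurable_bind_prob_space[OF Suc K] by simp
qed

lemma kernel_pow_space: "z \<in> space S \<Longrightarrow> kernel_pow S K k z \<in> space (prob_algebra S)"
  by (rule measurable_space[OF kernel_pow_meas])

lemma kernel_pow_Suc': "z \<in> space S \<Longrightarrow> kernel_pow S K (Suc k) z = bind (K z) (kernel_pow S K k)"
proof (induction k arbitrary: z)
  case 0
  have sK: "sets (K z) = sets S"
    using measurable_space[OF K 0] by (simp add: space_prob_algebra)
  have "kernel_pow S K 0 = return S" by (rule ext) simp
  then show ?case
    using bind_return[OF measurable_prob_algebraD[OF K] 0] bind_return''[OF sK] by simp
next
  case (Suc k)
  have sK: "sets (K z) = sets S"
    using measurable_space[OF K Suc(2)] by (simp add: space_prob_algebra)
  have M1: "kernel_pow S K k \<in> K z \<rightarrow>\<^sub>M subprob_algebra S"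
    using measurable_prob_algebraD[OF kernel_pow_meas] by (simp add: measurable_cong_sets[OF sK refl])
  have "kernel_pow S K (Suc (Suc k)) z = bind (kernel_pow S K (Suc k) z) K" by simp
  also have "\<dots> = bind (bind (K z) (kernel_pow S K k)) K" using Suc by simp
  also have "\<dots> = bind (K z) (\<lambda>w. bind (kernel_pow S K k w) K)"
    by (rule bind_assoc[OF M1 measurable_prob_algebraD[OF K]])
  also have "(\<lambda>w. bind (kernel_pow S K k w) K) = kernel_pow S K (Suc k)" by (rule ext) simp
  finally show ?case .
qed

end


lemma pint_bounds:
  fixes f :: "'b \<Rightarrow> real"
  assumes M: "prob_space M" and f: "f \<in> borel_measurable M"
    and lo: "\<And>x. x \<in> space M \<Longrightarrow> lo \<le> f x" and hi: "\<And>x. x \<in> space M \<Longrightarrow> f x \<le> hi"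
  shows "integrable M f" "lo \<le> (\<integral>x. f x \<partial>M)" "(\<integral>x. f x \<partial>M) \<le> hi"
proof -
  interpret prob_space M by (rule M)
  show int: "integrable M f"
  proof (rule integrable_const_bound[where B="max \<bar>lo\<bar> \<bar>hi\<bar>"])
    show "AE x in M. norm (f x) \<le> max \<bar>lo\<bar> \<bar>hi\<bar>"
      by (rule AE_I2) (use lo hi in force)
  qed (rule f)
  show "lo \<le> (\<integral>x. f x \<partial>M)" by (rule integral_ge_const[OF int]) (rule AE_I2, rule lo)
  show "(\<integral>x. f x \<partial>M) \<le> hi" by (rule integral_le_const[OF int]) (rule AE_I2, rule hi)
qed

lemma pint_abs:
  fixes f :: "'b \<Rightarrow> real"
  assumes M: "prob_space M" and f: "f \<in> borel_measurable M"
    and bd: "\<And>x. x \<in> space M \<Longrightarrow> \<bar>f x\<bar> \<le> B"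
  shows "integrable M f" "\<bar>\<integral>x. f x \<partial>M\<bar> \<le> B"
proof -
  have lo: "-B \<le> f x" if "x \<in> space M" for x using bd[OF that] by linarith
  have hi: "f x \<le> B" if "x \<in> space M" for x using bd[OF that] by linarith
  show "integrable M f" by (rule pint_bounds(1)[OF M f lo hi])
  show "\<bar>\<integral>x. f x \<partial>M\<bar> \<le> B"
    using pint_bounds(2,3)[OF M f lo hi] by (simp add: abs_le_iff)
qed

locale mchain_f = mchain +
  fixes f :: "'a \<Rightarrow> real" and Bf c b q :: real
  assumes f_meas[measurable]: "f \<in> borel_measurable S"
    and f_bd: "\<And>z. z \<in> space S \<Longrightarrow> \<bar>f z\<bar> \<le> Bf"
    and dec: "\<And>k z. z \<in> space S \<Longrightarrow> \<bar>(\<integral>x. f x \<partial>kernel_pow S K k z) - c\<bar> \<le> b * q ^ k"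
    and q: "0 \<le> q" "q < 1" and b: "0 \<le> b"
begin

definition Pf :: "nat \<Rightarrow> 'a \<Rightarrow> real" where
  "Pf k z = (\<integral>x. f x \<partial>kernel_pow S K k z)"

definition G :: "nat \<Rightarrow> 'a \<Rightarrow> real" where
  "G r z = (\<Sum>k<r. Pf k z)"

definition D :: "nat \<Rightarrow> 'a \<Rightarrow> 'a \<Rightarrow> real" where
  "D r x y = G r y - G (Suc r) x + f x"

lemma Pf_meas[measurable]: "Pf k \<in> borel_measurable S"
proof -
  have "(\<lambda>z. (\<integral>x. f x \<partial>kernel_pow S K k z)) \<in> borel_measurable S"
    by (rule measurable_compose[OF measurable_prob_algebraD[OF kernel_pow_meas]
          integral_measurable_subprob_algebra[OF f_meas]])
  then show ?thesis unfolding Pf_def[abs_def] .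
qed

lemma G_meas[measurable]: "G r \<in> borel_measurable S"
  unfolding G_def[abs_def] by measurable

lemma Pf_bd: "z \<in> space S \<Longrightarrow> \<bar>Pf k z\<bar> \<le> Bf"
proof -
  assume z: "z \<in> space S"
  have kp: "kernel_pow S K k z \<in> space (prob_algebra S)" by (rule kernel_pow_space[OF z])
  then have ps: "prob_space (kernel_pow S K k z)" and ss: "sets (kernel_pow S K k z) = sets S"
    by (auto simp: space_prob_algebra)
  have sp: "space (kernel_pow S K k z) = space S" using ss by (rule sets_eq_imp_space_eq)
  have fm: "f \<in> borel_measurable (kernel_pow S K k z)"
    unfolding measurable_cong_sets[OF ss refl] by (rule f_meas)
  show ?thesis unfolding Pf_def
    by (rule pint_abs(2)[OF ps fm]) (use f_bd in \<open>simp add: sp\<close>)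
qed

lemma Pf_0: "z \<in> space S \<Longrightarrow> Pf 0 z = f z"
  unfolding Pf_def by (simp add: integral_return)

lemma integrable_K: 
  fixes g :: "'a \<Rightarrow> real"
  assumes x: "x \<in> space S" and g: "g \<in> borel_measurable S"
    and gb: "\<And>z. z \<in> space S \<Longrightarrow> \<bar>g z\<bar> \<le> B"
  shows "integrable (K x) g"
proof -
  have kp: "K x \<in> space (prob_algebra S)" by (rule measurable_space[OF K x])
  then have ps: "prob_space (K x)" and ss: "sets (K x) = sets S"
    by (auto simp: space_prob_algebra)
  have sp: "space (K x) = space S" using ss by (rule sets_eq_imp_space_eq)
  have gm: "g \<in> borel_measurable (K x)"
    unfolding measurable_cong_sets[OF ss refl] by (rule g)
  show ?thesis by (rule pint_abs(1)[OF ps gm]) (use gb in \<open>simp add: sp\<close>)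
qed

lemma Pf_Suc: "z \<in> space S \<Longrightarrow> (\<integral>x. Pf k x \<partial>K z) = Pf (Suc k) z"
proof -
  assume z: "z \<in> space S"
  have kp: "K z \<in> space (prob_algebra S)" by (rule measurable_space[OF K z])
  then have ps: "prob_space (K z)" and ss: "sets (K z) = sets S"
    by (auto simp: space_prob_algebra)
  have N: "kernel_pow S K k \<in> K z \<rightarrow>\<^sub>M subprob_algebra S"
    using measurable_prob_algebraD[OF kernel_pow_meas] by (simp add: measurable_cong_sets[OF ss refl])
  have "Pf (Suc k) z = (\<integral>x. f x \<partial>bind (K z) (kernel_pow S K k))"
    unfolding Pf_def kernel_pow_Suc'[OF z] ..
  also have "\<dots> = (\<integral>x. (\<integral>y. f y \<partial>kernel_pow S K k x) \<partial>K z)"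
  proof (rule integral_bind[OF f_meas _ N])
    show "\<And>x. x \<in> space S \<Longrightarrow> \<bar>f x\<bar> \<le> Bf" by (rule f_bd)
    show "finite_measure (K z)" using ps by (rule prob_space.finite_measure)
    show "AE x in K z. emeasure (kernel_pow S K k x) (space (kernel_pow S K k x)) \<le> ennreal 1"
    proof (rule AE_I2)
      fix x assume "x \<in> space (K z)"
      then have "x \<in> space S" using sets_eq_imp_space_eq[OF ss] by simp
      then have "prob_space (kernel_pow S K k x)" using kernel_pow_space by (auto simp: space_prob_algebra)
      then show "emeasure (kernel_pow S K k x) (space (kernel_pow S K k x)) \<le> ennreal 1"
        by (simp add: prob_space.emeasure_space_1)
    qed
  qed
  finally show ?thesis unfolding Pf_def by simp
qed

definition a0 :: real where "a0 = b / (1 - q)"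

lemma G_bd: "z \<in> space S \<Longrightarrow> \<bar>G r z - real r * c\<bar> \<le> a0"
proof -
  assume z: "z \<in> space S"
  have "\<bar>G r z - real r * c\<bar> = \<bar>\<Sum>k<r. (Pf k z - c)\<bar>"
    unfolding G_def by (simp add: sum_subtractf)
  also have "\<dots> \<le> (\<Sum>k<r. \<bar>Pf k z - c\<bar>)" by (rule sum_abs)
  also have "\<dots> \<le> (\<Sum>k<r. b * q ^ k)"
    by (intro sum_mono) (use dec[OF z] in \<open>simp add: Pf_def\<close>)
  also have "\<dots> = b * (\<Sum>k<r. q ^ k)" by (simp add: sum_distrib_left)
  also have "\<dots> \<le> b * (1 / (1 - q))"
  proof (intro mult_left_mono b)
    have "(\<Sum>k<r. q ^ k) = (1 - q ^ r) / (1 - q)"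
    proof -
      have "(\<Sum>k<r. q ^ k) = (q ^ r - 1) / (q - 1)" using q by (subst geometric_sum) auto
      also have "\<dots> = (1 - q ^ r) / (1 - q)"
        by (metis divide_minus_left divide_minus_right minus_diff_eq)
      finally show ?thesis .
    qed
    also have "\<dots> \<le> 1 / (1 - q)" using q by (intro divide_right_mono) auto
    finally show "(\<Sum>k<r. q ^ k) \<le> 1 / (1 - q)" .
  qed
  finally show ?thesis by (simp add: a0_def)
qed

lemma G_Suc: "x \<in> space S \<Longrightarrow> (\<integral>y. G r y \<partial>K x) = G (Suc r) x - f x"
proof -
  assume x: "x \<in> space S"
  have "(\<integral>y. G r y \<partial>K x) = (\<Sum>k<r. (\<integral>y. Pf k y \<partial>K x))"
    unfolding G_def
    by (intro Bochner_Integration.integral_sum integrable_K[OF x Pf_meas Pf_bd])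
  also have "\<dots> = (\<Sum>k<r. Pf (Suc k) x)" using Pf_Suc[OF x] by simp
  also have "\<dots> = G (Suc r) x - f x"
    unfolding G_def sum.lessThan_Suc_shift using Pf_0[OF x] by simp
  finally show ?thesis .
qed

lemma hoeffding_step:
  assumes x: "x \<in> space S" and l: "l > 0" and A: "a0 \<le> A"
  shows "(\<integral>\<^sup>+y. ennreal (exp (l * D r x y)) \<partial>K x) \<le> ennreal (exp (l\<^sup>2 * A\<^sup>2 / 2))"
proof -
  have kp: "K x \<in> space (prob_algebra S)" by (rule measurable_space[OF K x])
  then have ps: "prob_space (K x)" and ss: "sets (K x) = sets S"
    by (auto simp: space_prob_algebra)
  have sp: "space (K x) = space S" using ss by (rule sets_eq_imp_space_eq)
  have m1: "G r \<in> borel_measurable (K x)"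
    unfolding measurable_cong_sets[OF ss refl] by (rule G_meas)
  have m2: "AE y in K x. G r y \<in> {real r * c - A..real r * c + A}"
  proof (rule AE_I2)
    fix y assume "y \<in> space (K x)"
    then have "y \<in> space S" by (simp add: sp)
    from G_bd[OF this, of r] A show "G r y \<in> {real r * c - A..real r * c + A}"
      by (simp add: abs_le_iff)
  qed
  interpret ibrv: interval_bounded_random_variable "K x" "G r" "real r * c - A" "real r * c + A"
    unfolding interval_bounded_random_variable_def interval_bounded_random_variable_axioms_def
    using ps m1 m2 by blast
  have "(\<integral>\<^sup>+y. ennreal (exp (l * (G r y - (\<integral>y. G r y \<partial>K x)))) \<partial>K x)
      \<le> ennreal (exp (l\<^sup>2 * ((real r * c + A) - (real r * c - A))\<^sup>2 / 8))"
    by (rule ibrv.Hoeffdings_lemma_nn_integral[OF l])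
  also have "l\<^sup>2 * ((real r * c + A) - (real r * c - A))\<^sup>2 / 8 = l\<^sup>2 * A\<^sup>2 / 2"
    by (simp add: power2_eq_square field_simps)
  also have "(\<lambda>y. ennreal (exp (l * (G r y - (\<integral>y. G r y \<partial>K x))))) = (\<lambda>y. ennreal (exp (l * D r x y)))"
    by (rule ext) (simp add: G_Suc[OF x] D_def)
  finally show ?thesis .
qed

lemma telescope:
  assumes n: "1 \<le> n" and \<omega>: "\<And>i. i < n \<Longrightarrow> \<omega> i \<in> space S"
  shows "(\<Sum>i<n. f (\<omega> i)) = G n (\<omega> 0) + (\<Sum>j\<in>{1..<n}. D (n - j) (\<omega> (j - 1)) (\<omega> j))"
proof -
  have *: "G n (\<omega> 0) + (\<Sum>j\<in>{1..<m}. D (n - j) (\<omega> (j - 1)) (\<omega> j))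
      = (\<Sum>i<m - 1. f (\<omega> i)) + G (n - m + 1) (\<omega> (m - 1))" if "1 \<le> m" "m \<le> n" for m
    using that
  proof (induction m rule: dec_induct)
    case base then show ?case using n by simp
  next
    case (step m)
    have "{1..<Suc m} = insert m {1..<m}" using step(1) by auto
    then have "G n (\<omega> 0) + (\<Sum>j\<in>{1..<Suc m}. D (n - j) (\<omega> (j - 1)) (\<omega> j))
        = (\<Sum>i<m - 1. f (\<omega> i)) + G (n - m + 1) (\<omega> (m - 1)) + D (n - m) (\<omega> (m - 1)) (\<omega> m)"
      using step by simp
    also have "\<dots> = (\<Sum>i<m - 1. f (\<omega> i)) + f (\<omega> (m - 1)) + G (n - m) (\<omega> m)"
    proof -
      have "Suc (n - m) = n - m + 1" using step by simp
      then show ?thesis unfolding D_def using step by (simp add: Suc_diff_le)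
    qed
    also have "(\<Sum>i<m - 1. f (\<omega> i)) + f (\<omega> (m - 1)) = (\<Sum>i<Suc m - 1. f (\<omega> i))"
      using step(1) by (cases m) auto
    also have "n - m = n - Suc m + 1" using step by simp
    finally show ?case by simp
  qed
  have "G 1 (\<omega> (n - 1)) = f (\<omega> (n - 1))"
    unfolding G_def using Pf_0[OF \<omega>[of "n - 1"]] n by simp
  then show ?thesis using *[OF n order_refl] n by (cases n) auto
qed


lemma prod_meas:
  fixes \<psi> :: "nat \<Rightarrow> 'a \<Rightarrow> 'a \<Rightarrow> ennreal"
  assumes \<psi>m: "\<And>j. (\<lambda>(x, y). \<psi> j x y) \<in> borel_measurable (S \<Otimes>\<^sub>M S)"
  shows "(\<lambda>\<omega>. \<Prod>j\<in>{1..<k}. \<psi> j (\<omega> (j - 1)) (\<omega> j)) \<in> borel_measurable (PiM {..<k} (\<lambda>_. S))"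
proof -
  have comp: "(\<lambda>\<omega>. \<omega> i) \<in> PiM {..<k} (\<lambda>_. S) \<rightarrow>\<^sub>M S" if "i < k" for i
    using that by (intro measurable_component_singleton) auto
  have \<psi>c: "(\<lambda>\<omega>. \<psi> j (\<omega> (j - 1)) (\<omega> j)) \<in> borel_measurable (PiM {..<k} (\<lambda>_. S))"
    if "j < k" for j
  proof -
    have "(\<lambda>\<omega>. (\<omega> (j - 1), \<omega> j)) \<in> PiM {..<k} (\<lambda>_. S) \<rightarrow>\<^sub>M S \<Otimes>\<^sub>M S"
      using that by (intro measurable_Pair comp) auto
    from measurable_compose[OF this \<psi>m[of j]] show ?thesis by simp
  qed
  show ?thesis by (intro borel_measurable_prod_ennreal \<psi>c) auto
qed

lemma sum_meas: "(\<lambda>\<omega>. \<Sum>i<n. f (\<omega> i)) \<in> borel_measurable (PiM {..<n} (\<lambda>_. S))"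
proof -
  have "(\<lambda>\<omega>. f (\<omega> i)) \<in> borel_measurable (PiM {..<n} (\<lambda>_. S))" if "i < n" for i
    using that by (intro measurable_compose[OF measurable_component_singleton[of i "{..<n}" "\<lambda>_. S"] f_meas]) auto
  then show ?thesis by (intro borel_measurable_sum) auto
qed

lemma tail:
  assumes n: "1 \<le> n" and l: "l > 0" and A: "a0 \<le> A"
  shows "emeasure (chain_law S K \<mu> n)
      {\<omega> \<in> space (PiM {..<n} (\<lambda>_. S)). a0 + t \<le> (\<Sum>i<n. f (\<omega> i)) - real n * c}
    \<le> ennreal (exp (- l * t + real n * l\<^sup>2 * A\<^sup>2 / 2))"
proof -
  let ?M = "chain_law S K \<mu> n"
  let ?E = "{\<omega> \<in> space (PiM {..<n} (\<lambda>_. S)). a0 + t \<le> (\<Sum>i<n. f (\<omega> i)) - real n * c}"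
  define \<psi> where "\<psi> j x y = ennreal (exp (l * D (n - j) x y))" for j x y
  define X where "X \<omega> = (\<Sum>j\<in>{1..<n}. D (n - j) (\<omega> (j - 1)) (\<omega> j))" for \<omega>
  have \<psi>m: "(\<lambda>(x, y). \<psi> j x y) \<in> borel_measurable (S \<Otimes>\<^sub>M S)" for j
    unfolding \<psi>_def D_def by measurable
  have Em: "?E \<in> sets ?M"
    unfolding sets_chain_law using sum_meas by measurable
  have prodeq: "(\<Prod>j\<in>{1..<n}. \<psi> j (\<omega> (j - 1)) (\<omega> j)) = ennreal (exp (l * X \<omega>))" for \<omega>
    unfolding \<psi>_def X_def
    by (simp add: prod_ennreal exp_sum sum_distrib_left)
  have "emeasure ?M ?E = (\<integral>\<^sup>+\<omega>. indicator ?E \<omega> \<partial>?M)"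
    using Em by simp
  also have "\<dots> \<le> (\<integral>\<^sup>+\<omega>. ennreal (exp (- l * t)) * (\<Prod>j\<in>{1..<n}. \<psi> j (\<omega> (j - 1)) (\<omega> j)) \<partial>?M)"
  proof (rule nn_integral_mono)
    fix \<omega> assume \<omega>: "\<omega> \<in> space ?M"
    then have \<omega>': "\<omega> \<in> space (PiM {..<n} (\<lambda>_. S))" by (simp add: space_chain_law)
    then have \<omega>i: "\<And>i. i < n \<Longrightarrow> \<omega> i \<in> space S" unfolding space_PiM PiE_def Pi_def by simp
    show "indicator ?E \<omega> \<le> ennreal (exp (- l * t)) * (\<Prod>j\<in>{1..<n}. \<psi> j (\<omega> (j - 1)) (\<omega> j))"
    proof (cases "\<omega> \<in> ?E")
      case True
      then have "a0 + t \<le> (\<Sum>i<n. f (\<omega> i)) - real n * c" by simp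
      also have "(\<Sum>i<n. f (\<omega> i)) = G n (\<omega> 0) + X \<omega>"
        unfolding X_def by (rule telescope[OF n \<omega>i])
      also have "G n (\<omega> 0) \<le> real n * c + a0"
        using G_bd[OF \<omega>i[of 0], of n] n by (simp add: abs_le_iff)
      finally have "t \<le> X \<omega>" by simp
      then have "1 \<le> exp (- l * t) * exp (l * X \<omega>)"
        using l by (simp add: exp_add[symmetric] mult_left_mono)
      then have "ennreal 1 \<le> ennreal (exp (- l * t) * exp (l * X \<omega>))"
        by (rule ennreal_leI)
      then show ?thesis using True unfolding prodeq by (simp add: ennreal_mult)
    qed simp
  qed
  also have "\<dots> = ennreal (exp (- l * t)) * (\<integral>\<^sup>+\<omega>. (\<Prod>j\<in>{1..<n}. \<psi> j (\<omega> (j - 1)) (\<omega> j)) \<partial>?M)"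
    by (rule nn_integral_cmult)
      (simp only: measurable_cong_sets[OF sets_chain_law refl] prod_meas[OF \<psi>m])
  also have "\<dots> \<le> ennreal (exp (- l * t)) * ennreal (exp (l\<^sup>2 * A\<^sup>2 / 2)) ^ (n - 1)"
  proof (intro mult_left_mono prod_bound[OF \<psi>m _ n])
    fix j x assume "x \<in> space S"
    then show "(\<integral>\<^sup>+y. \<psi> j x y \<partial>K x) \<le> ennreal (exp (l\<^sup>2 * A\<^sup>2 / 2))"
      unfolding \<psi>_def by (rule hoeffding_step[OF _ l A])
  qed simp
  also have "\<dots> = ennreal (exp (- l * t) * exp (real (n - 1) * (l\<^sup>2 * A\<^sup>2 / 2)))"
    by (simp add: ennreal_power ennreal_mult flip: exp_of_nat_mult)
  also have "\<dots> = ennreal (exp (- l * t + real (n - 1) * (l\<^sup>2 * A\<^sup>2 / 2)))"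
    by (simp only: exp_add)
  also have "\<dots> \<le> ennreal (exp (- l * t + real n * l\<^sup>2 * A\<^sup>2 / 2))"
  proof (intro ennreal_leI exp_mono add_left_mono)
    have "real (n - 1) * (l\<^sup>2 * A\<^sup>2 / 2) \<le> real n * (l\<^sup>2 * A\<^sup>2 / 2)"
      by (intro mult_right_mono) auto
    then show "real (n - 1) * (l\<^sup>2 * A\<^sup>2 / 2) \<le> real n * l\<^sup>2 * A\<^sup>2 / 2" by simp
  qed
  finally show ?thesis .
qed

end


lemma wass_bound:
  fixes f :: "'a \<Rightarrow> real" and \<rho> :: "'a \<Rightarrow> 'a \<Rightarrow> real"
  assumes m1: "m1 \<in> space (prob_algebra S)" and m2: "m2 \<in> space (prob_algebra S)"
    and f: "f \<in> borel_measurable S" and fb: "\<And>x. x \<in> space S \<Longrightarrow> \<bar>f x\<bar> \<le> B"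
    and lip: "\<And>x y. x \<in> space S \<Longrightarrow> y \<in> space S \<Longrightarrow> \<bar>f x - f y\<bar> \<le> L * \<rho> x y"
    and L: "0 \<le> L"
    and W: "wasserstein S \<rho> m1 m2 \<le> ennreal w" and w: "0 \<le> w"
  shows "\<bar>(\<integral>x. f x \<partial>m1) - (\<integral>x. f x \<partial>m2)\<bar> \<le> L * w"
proof (rule field_le_epsilon)
  fix e :: real assume e: "0 < e"
  define e' where "e' = e / (L + 1)"
  have e': "0 < e'" using e L by (simp add: e'_def)
  have "wasserstein S \<rho> m1 m2 < ennreal (w + e')"
    using W e' w by (meson ennreal_lessI le_less_trans less_add_same_cancel1 add_pos_nonneg
        order.strict_trans1)
  then obtain Q where Q: "Q \<in> couplings S m1 m2" and Qi: "(\<integral>\<^sup>+p. ennreal (\<rho> (fst p) (snd p)) \<partial>Q) < ennreal (w + e')"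
    unfolding wasserstein_def by (auto simp: INF_less_iff)
  from Q have Qp: "prob_space Q" and Qs: "sets Q = sets (S \<Otimes>\<^sub>M S)"
    and Q1: "distr Q S fst = m1" and Q2: "distr Q S snd = m2"
    unfolding couplings_def by auto
  have Qsp: "space Q = space S \<times> space S"
    using sets_eq_imp_space_eq[OF Qs] by (simp add: space_pair_measure)
  have fstm: "fst \<in> Q \<rightarrow>\<^sub>M S" unfolding measurable_cong_sets[OF Qs refl] by simp
  have sndm: "snd \<in> Q \<rightarrow>\<^sub>M S" unfolding measurable_cong_sets[OF Qs refl] by simp
  have f1: "(\<lambda>p. f (fst p)) \<in> borel_measurable Q" by (rule measurable_compose[OF fstm f])
  have f2: "(\<lambda>p. f (snd p)) \<in> borel_measurable Q" by (rule measurable_compose[OF sndm f])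
  have i1: "integrable Q (\<lambda>p. f (fst p))"
    by (rule pint_abs(1)[OF Qp f1]) (use fb in \<open>auto simp: Qsp\<close>)
  have i2: "integrable Q (\<lambda>p. f (snd p))"
    by (rule pint_abs(1)[OF Qp f2]) (use fb in \<open>auto simp: Qsp\<close>)
  have eq1: "(\<integral>x. f x \<partial>m1) = (\<integral>p. f (fst p) \<partial>Q)"
    unfolding Q1[symmetric] by (rule integral_distr[OF fstm f])
  have eq2: "(\<integral>x. f x \<partial>m2) = (\<integral>p. f (snd p) \<partial>Q)"
    unfolding Q2[symmetric] by (rule integral_distr[OF sndm f])
  let ?g = "\<lambda>p. f (fst p) - f (snd p)"
  have gi: "integrable Q ?g" using i1 i2 by simp
  have "ennreal \<bar>(\<integral>x. f x \<partial>m1) - (\<integral>x. f x \<partial>m2)\<bar> = ennreal (norm (\<integral>p. ?g p \<partial>Q))"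
    unfolding eq1 eq2 using i1 i2 by simp
  also have "\<dots> \<le> (\<integral>\<^sup>+p. norm (?g p) \<partial>Q)"
    by (rule integral_norm_bound_ennreal[OF gi])
  also have "\<dots> \<le> ennreal (L * (w + e'))"
  proof (cases "L = 0")
    case True
    have "(\<integral>\<^sup>+p. norm (?g p) \<partial>Q) = (\<integral>\<^sup>+p. 0 \<partial>Q)"
    proof (rule nn_integral_cong)
      fix p assume "p \<in> space Q"
      then have "\<bar>?g p\<bar> \<le> 0" using lip[of "fst p" "snd p"] True by (auto simp: Qsp)
      then show "ennreal (norm (?g p)) = 0" by simp
    qed
    then show ?thesis by simp
  next
    case False
    then have Lp: "0 < L" using L by simp
    have gm: "(\<lambda>p. ennreal (norm (?g p) / L)) \<in> borel_measurable Q" using f1 f2 by measurable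
    have "(\<integral>\<^sup>+p. norm (?g p) \<partial>Q) = (\<integral>\<^sup>+p. ennreal L * ennreal (norm (?g p) / L) \<partial>Q)"
      by (rule nn_integral_cong) (use Lp in \<open>simp add: ennreal_mult[symmetric]\<close>)
    also have "\<dots> = ennreal L * (\<integral>\<^sup>+p. ennreal (norm (?g p) / L) \<partial>Q)"
      by (rule nn_integral_cmult[OF gm])
    also have "\<dots> \<le> ennreal L * (\<integral>\<^sup>+p. ennreal (\<rho> (fst p) (snd p)) \<partial>Q)"
    proof (intro mult_left_mono nn_integral_mono ennreal_leI)
      fix p assume "p \<in> space Q"
      then have "\<bar>?g p\<bar> \<le> L * \<rho> (fst p) (snd p)" using lip[of "fst p" "snd p"] by (auto simp: Qsp)
      then show "norm (?g p) / L \<le> \<rho> (fst p) (snd p)" using Lp by (simp add: field_simps)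
    qed simp
    also have "\<dots> \<le> ennreal L * ennreal (w + e')"
      using Qi by (intro mult_left_mono) auto
    also have "\<dots> = ennreal (L * (w + e'))" by (rule ennreal_mult[symmetric]) (use L w e' in auto)
    finally show ?thesis .
  qed
  finally have "\<bar>(\<integral>x. f x \<partial>m1) - (\<integral>x. f x \<partial>m2)\<bar> \<le> L * (w + e')"
    using L w e' by (subst (asm) ennreal_le_iff) auto
  also have "L * (w + e') \<le> L * w + e"
  proof -
    have "L * e' \<le> e" using L e unfolding e'_def by (simp add: field_simps)
    then show ?thesis by (simp add: distrib_left)
  qed
  finally show "\<bar>(\<integral>x. f x \<partial>m1) - (\<integral>x. f x \<partial>m2)\<bar> \<le> L * w + e" .
qed

lemma det1:
  fixes er' :: "'h \<Rightarrow> real"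
  assumes hs: "hs \<in> H" and g: "g \<in> H" and nn: "\<And>h. h \<in> H \<Longrightarrow> 0 \<le> er' h"
    and cl: "\<And>h. h \<in> H \<Longrightarrow> \<bar>er' h - er' g\<bar> \<le> \<epsilon> / 4" and e: "0 < \<epsilon>"
  shows "\<bar>er' hs - (INF h\<in>H. er' h)\<bar> < 5 * \<epsilon>"
proof -
  have bdd: "bdd_below (er' ` H)" using nn by (intro bdd_belowI2[where m=0])
  have lo: "(INF h\<in>H. er' h) \<le> er' hs" by (rule cINF_lower[OF bdd hs])
  have "er' hs - \<epsilon> / 2 \<le> (INF h\<in>H. er' h)"
  proof (rule cINF_greatest)
    show "H \<noteq> {}" using hs by auto
    fix h assume "h \<in> H"
    with cl[OF this] cl[OF hs] show "er' hs - \<epsilon> / 2 \<le> er' h" by linarith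
  qed
  then show ?thesis using lo e by (simp add: abs_less_iff)
qed

lemma det:
  fixes er' emp :: "'h \<Rightarrow> real"
  assumes hs: "hs \<in> H" and nn: "\<And>h. h \<in> H \<Longrightarrow> 0 \<le> er' h"
    and nne: "\<And>h. h \<in> H \<Longrightarrow> 0 \<le> emp h"
    and asem: "emp hs < (INF h\<in>H. emp h) + \<epsilon>"
    and cl: "\<And>h. h \<in> H \<Longrightarrow> \<exists>g\<in>F. \<bar>emp h - emp g\<bar> \<le> \<epsilon> / 4 \<and> \<bar>er' h - er' g\<bar> \<le> \<epsilon> / 4"
    and good: "\<And>g. g \<in> F \<Longrightarrow> \<bar>emp g - er' g\<bar> < 17 * \<epsilon> / 16"
    and e: "0 < \<epsilon>"
  shows "\<bar>er' hs - (INF h\<in>H. er' h)\<bar> < 5 * \<epsilon>"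
proof -
  have t1: "\<bar>emp h - er' h\<bar> < 25 * \<epsilon> / 16" if hH: "h \<in> H" for h
  proof -
    obtain g where gF: "g \<in> F" and g1: "\<bar>emp h - emp g\<bar> \<le> \<epsilon> / 4" and g2: "\<bar>er' h - er' g\<bar> \<le> \<epsilon> / 4"
      using cl[OF hH] by blast
    from good[OF gF] g1 g2 show ?thesis by linarith
  qed
  have bdd: "bdd_below (er' ` H)" using nn by (intro bdd_belowI2[where m=0])
  have bdde: "bdd_below (emp ` H)" using nne by (intro bdd_belowI2[where m=0])
  have lo: "(INF h\<in>H. er' h) \<le> er' hs" by (rule cINF_lower[OF bdd hs])
  have "er' hs - 66 * \<epsilon> / 16 \<le> (INF h\<in>H. er' h)"
  proof (rule cINF_greatest)
    show "H \<noteq> {}" using hs by auto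
    fix h assume h: "h \<in> H"
    have "(INF h\<in>H. emp h) \<le> emp h" by (rule cINF_lower[OF bdde h])
    with t1[OF h] t1[OF hs] asem show "er' hs - 66 * \<epsilon> / 16 \<le> er' h" by linarith
  qed
  then show ?thesis using lo e by (simp add: abs_less_iff)
qed




theorem theorem1p1:
  fixes MX :: "'x measure" and Ys :: "real set" and Zs :: "('x \<times> real) set"
    and \<rho> :: "'x \<times> real \<Rightarrow> 'x \<times> real \<Rightarrow> real"
    and BZ :: "('x \<times> real) measure"
    and P :: "'x \<times> real \<Rightarrow> ('x \<times> real) measure"
    and H :: "('x \<Rightarrow> real) set" and dH :: "('x \<Rightarrow> real) \<Rightarrow> ('x \<Rightarrow> real) \<Rightarrow> real"
    and lo :: "real \<Rightarrow> real \<Rightarrow> real" and L Lb \<eta> :: real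
    and \<pi> \<mu> :: "('x \<times> real) measure" and C1 C2 \<epsilon> \<delta> :: real
    and A :: "('x \<times> real) list \<Rightarrow> ('x \<Rightarrow> real)" and n :: nat
  assumes Z_sub: "Zs \<subseteq> space MX \<times> Ys"
    and metric: "Metric_space Zs \<rho>"
    and complete: "Metric_space.mcomplete Zs \<rho>"
    and separable: "separable_space (Metric_space.mtopology Zs \<rho>)"
    and \<rho>_bounded: "\<exists>B. \<forall>z\<in>Zs. \<forall>w\<in>Zs. \<rho> z w \<le> B"
    and BZ_def: "BZ = borel_of_top (Metric_space.mtopology Zs \<rho>)"
    and prX: "\<forall>S\<in>sets MX. {z\<in>Zs. fst z \<in> S} \<in> sets BZ"
    and prY: "\<forall>S\<in>sets (restrict_space borel Ys). {z\<in>Zs. snd z \<in> S} \<in> sets BZ"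
    and kernel: "P \<in> BZ \<rightarrow>\<^sub>M prob_algebra BZ"
    (* (A1) *)
    and H_maps: "\<forall>h\<in>H. \<forall>x\<in>space MX. h x \<in> Ys"
    and H_metric: "Metric_space H dH"
    and H_tb: "Metric_space.mtotally_bounded H dH H"
    (* (A2) *)
    and lo_nonneg: "\<forall>a\<in>Ys. \<forall>b\<in>Ys. 0 \<le> lo a b"
    and lo_meas: "(\<lambda>p. lo (fst p) (snd p)) \<in> borel_measurable
                    (restrict_space borel Ys \<Otimes>\<^sub>M restrict_space borel Ys)"
    and L_nonneg: "0 \<le> L" and Lb_nonneg: "0 \<le> Lb"
    and lipschitz: "\<forall>z1\<in>Zs. \<forall>z2\<in>Zs. \<forall>h1\<in>H. \<forall>h2\<in>H.
        \<bar>loss_h lo h1 z1 - loss_h lo h2 z2\<bar> \<le> L * \<rho> z1 z2 + Lb * dH h1 h2"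
    (* (A3) *)
    and Y_bounded: "bounded Ys"
    and \<eta>: "0 < \<eta>" "\<eta> < 1"
    and contraction: "\<forall>z1\<in>Zs. \<forall>z2\<in>Zs.
        wasserstein BZ \<rho> (P z1) (P z2) \<le> ennreal ((1 - \<eta>) * \<rho> z1 z2)"
    (* invariant probability measure and geometric convergence *)
    and \<pi>_prob: "\<pi> \<in> space (prob_algebra BZ)"
    and \<pi>_inv: "bind \<pi> P = \<pi>"
    and C1: "0 < C1" and C2: "0 < C2"
    and conv: "\<forall>z\<in>Zs. \<forall>k::nat.
        wasserstein BZ \<rho> (kernel_pow BZ P k z) \<pi> \<le> ennreal (C1 * exp (- C2 * real k))"
    (* algorithm *)
    and \<epsilon>: "0 < \<epsilon>" and \<delta>: "0 < \<delta>" "\<delta> < 1"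
    and asem: "ASEM \<epsilon> Zs lo H A"
    (* initial distribution and sample size *)
    and \<mu>_prob: "\<mu> \<in> space (prob_algebra BZ)"
    and n_pos: "1 \<le> n"
    and n_large: "real n \<ge> max (16 * C1 * L / (\<epsilon> * (1 - exp (- C2))))
        (128 * C1\<^sup>2 * L\<^sup>2 * ln (real (covering_number dH H (ereal \<epsilon> / ereal (4 * Lb))) / \<delta>)
          / (\<epsilon>\<^sup>2 * (1 - exp (- C2))\<^sup>2))"
  shows "\<exists>B\<in>sets (chain_law BZ P \<mu> n).
           B \<subseteq> {\<omega> \<in> space (PiM {..<n} (\<lambda>_. BZ)).
                 \<bar>er \<pi> lo (A (map \<omega> [0..<n])) - opt \<pi> lo H\<bar> < 5 * \<epsilon>}
         \<and> measure (chain_law BZ P \<mu> n) B \<ge> 1 - \<delta>"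
proof -
  interpret Zm: Metric_space Zs \<rho> by (rule metric)
  interpret Hm: Metric_space H dH by (rule H_metric)
  have opens_sub: "{U. openin T U} \<subseteq> Pow (topspace T)" for T :: "('x \<times> real) topology"
    by (auto dest: openin_subset)
  have spBZ: "space BZ = Zs"
    unfolding BZ_def borel_of_top_def by (simp add: space_measure_of_conv)
  have openBZ: "U \<in> sets BZ" if "openin Zm.mtopology U" for U
    unfolding BZ_def borel_of_top_def sets_measure_of[OF opens_sub]
    using that by (auto intro: sigma_sets.Basic)
  have \<pi>p: "prob_space \<pi>" and \<pi>s: "sets \<pi> = sets BZ"
    using \<pi>_prob by (auto simp: space_prob_algebra)
  have sp\<pi>: "space \<pi> = Zs" using sets_eq_imp_space_eq[OF \<pi>s] spBZ by simp
  have "Zs \<noteq> {}" using prob_space.not_empty[OF \<pi>p] sp\<pi> by simp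
  then obtain z0 where z0: "z0 \<in> Zs" by blast
  obtain B\<rho> where B\<rho>: "\<And>z w. z \<in> Zs \<Longrightarrow> w \<in> Zs \<Longrightarrow> \<rho> z w \<le> B\<rho>"
    using \<rho>_bounded by blast
  define lh where "lh h = loss_h lo h" for h :: "'x \<Rightarrow> real"
  have lipz: "\<bar>lh h z1 - lh h z2\<bar> \<le> L * \<rho> z1 z2" if "h \<in> H" "z1 \<in> Zs" "z2 \<in> Zs" for h z1 z2
    using lipschitz that Hm.zero[of h h] unfolding lh_def by fastforce
  have liph: "\<bar>lh h z - lh g z\<bar> \<le> Lb * dH h g" if "h \<in> H" "g \<in> H" "z \<in> Zs" for h g z
    using lipschitz that Zm.zero[of z z] unfolding lh_def by fastforce
  have lhnn: "0 \<le> lh h z" if "h \<in> H" "z \<in> Zs" for h z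
  proof -
    have "fst z \<in> space MX" "snd z \<in> Ys" using that Z_sub by auto
    then show ?thesis using H_maps lo_nonneg that unfolding lh_def loss_h_def by blast
  qed
  have lhmeas: "lh h \<in> borel_measurable BZ" if hH: "h \<in> H" for h
  proof (rule borel_measurableI)
    fix S :: "real set" assume S: "open S"
    have "openin Zm.mtopology (lh h -` S \<inter> Zs)"
      unfolding Zm.openin_mtopology
    proof (intro conjI allI impI)
      fix x assume x: "x \<in> lh h -` S \<inter> Zs"
      then obtain e where e: "e > 0" "ball (lh h x) e \<subseteq> S"
        using S by (auto simp: open_contains_ball)
      show "\<exists>r>0. Zm.mball x r \<subseteq> lh h -` S \<inter> Zs"
      proof (intro exI conjI)
        show "0 < e / (L + 1)" using e L_nonneg by simp
        show "Zm.mball x (e / (L + 1)) \<subseteq> lh h -` S \<inter> Zs"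
        proof
          fix y assume y: "y \<in> Zm.mball x (e / (L + 1))"
          then have yZ: "y \<in> Zs" and xy: "\<rho> x y < e / (L + 1)" by auto
          have "\<bar>lh h x - lh h y\<bar> \<le> L * \<rho> x y" using lipz[OF hH _ yZ] x by auto
          also have "\<dots> \<le> (L + 1) * \<rho> x y" using Zm.nonneg[of x y] by (simp add: distrib_right)
          also have "\<dots> < (L + 1) * (e / (L + 1))"
            using xy L_nonneg by (intro mult_strict_left_mono) auto
          also have "\<dots> = e" using L_nonneg by simp
          finally have "dist (lh h x) (lh h y) < e" by (simp add: dist_real_def)
          then show "y \<in> lh h -` S \<inter> Zs" using e yZ by auto
        qed
      qed
    qed auto
    then show "lh h -` S \<inter> space BZ \<in> sets BZ" unfolding spBZ by (rule openBZ)
  qed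
  have lhbd: "\<bar>lh h z\<bar> \<le> \<bar>lh h z0\<bar> + L * B\<rho>" if "h \<in> H" "z \<in> Zs" for h z
  proof -
    have "\<bar>lh h z - lh h z0\<bar> \<le> L * \<rho> z z0" using lipz that z0 by blast
    also have "\<dots> \<le> L * B\<rho>" using B\<rho>[OF that(2) z0] L_nonneg by (rule mult_left_mono)
    finally show ?thesis by linarith
  qed
  interpret mc: mchain BZ P \<mu> by unfold_locales (rule kernel, rule \<mu>_prob)
  define q where "q = exp (- C2)"
  have q0: "0 \<le> q" and q1: "q < 1" unfolding q_def using C2 by auto
  define a where "a = L * C1 / (1 - q)"
  have a0: "0 \<le> a" unfolding a_def using L_nonneg C1 q1 by simp
  have er_eq: "er \<pi> lo h = (\<integral>x. lh h x \<partial>\<pi>)" for h unfolding er_def lh_def ..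
  have dec: "\<bar>(\<integral>x. lh h x \<partial>kernel_pow BZ P k z) - er \<pi> lo h\<bar> \<le> L * C1 * q ^ k"
    if hH: "h \<in> H" and z: "z \<in> Zs" for h k z
  proof -
    have zs: "z \<in> space BZ" using z spBZ by simp
    have "\<bar>(\<integral>x. lh h x \<partial>kernel_pow BZ P k z) - (\<integral>x. lh h x \<partial>\<pi>)\<bar> \<le> L * (C1 * exp (- C2 * real k))"
    proof (rule wass_bound[OF mc.kernel_pow_space[OF zs] \<pi>_prob lhmeas[OF hH]])
      show "\<bar>lh h x\<bar> \<le> \<bar>lh h z0\<bar> + L * B\<rho>" if "x \<in> space BZ" for x
        using lhbd[OF hH] that spBZ by simp
      show "\<bar>lh h x - lh h y\<bar> \<le> L * \<rho> x y" if "x \<in> space BZ" "y \<in> space BZ" for x y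
        using lipz[OF hH] that spBZ by simp
      show "wasserstein BZ \<rho> (kernel_pow BZ P k z) \<pi> \<le> ennreal (C1 * exp (- C2 * real k))"
        using conv z by blast
    qed (use L_nonneg C1 in auto)
    also have "exp (- C2 * real k) = q ^ k"
      unfolding q_def by (simp add: exp_of_nat_mult[symmetric] mult.commute)
    finally show ?thesis by (simp add: er_eq mult.assoc)
  qed
  have mf: "mchain_f BZ P \<mu> (lh h) (\<bar>lh h z0\<bar> + L * B\<rho>) (er \<pi> lo h) (L * C1) q" if hH: "h \<in> H" for h
  proof (intro mchain_f.intro mchain_f_axioms.intro)
    show "mchain BZ P \<mu>" by unfold_locales (rule kernel, rule \<mu>_prob)
    show "lh h \<in> borel_measurable BZ" by (rule lhmeas[OF hH])
    show "\<bar>lh h z\<bar> \<le> \<bar>lh h z0\<bar> + L * B\<rho>" if "z \<in> space BZ" for z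
      using lhbd[OF hH] that spBZ by simp
    show "\<bar>(\<integral>x. lh h x \<partial>kernel_pow BZ P k z) - er \<pi> lo h\<bar> \<le> L * C1 * q ^ k" if "z \<in> space BZ" for k z
      using dec[OF hH] that spBZ by simp
  qed (use q0 q1 L_nonneg C1 in auto)
  have mf': "mchain_f BZ P \<mu> (\<lambda>z. - lh h z) (\<bar>lh h z0\<bar> + L * B\<rho>) (- er \<pi> lo h) (L * C1) q" if hH: "h \<in> H" for h
  proof (intro mchain_f.intro mchain_f_axioms.intro)
    show "mchain BZ P \<mu>" by unfold_locales (rule kernel, rule \<mu>_prob)
    show "(\<lambda>z. - lh h z) \<in> borel_measurable BZ" using lhmeas[OF hH] by measurable
    show "\<bar>- lh h z\<bar> \<le> \<bar>lh h z0\<bar> + L * B\<rho>" if "z \<in> space BZ" for z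
      using lhbd[OF hH] that spBZ by simp
    show "\<bar>(\<integral>x. - lh h x \<partial>kernel_pow BZ P k z) - - er \<pi> lo h\<bar> \<le> L * C1 * q ^ k" if "z \<in> space BZ" for k z
      using dec[OF hH, of z k] that spBZ by (simp add: abs_minus_commute)
  qed (use q0 q1 L_nonneg C1 in auto)
  define r where "r = ereal \<epsilon> / ereal (4 * Lb)"
  have hne: "A [z0] \<in> H" using asem z0 unfolding ASEM_def by auto
  then have Hne: "H \<noteq> {}" by auto
  have cover_ex: "\<exists>F. finite F \<and> F \<subseteq> H \<and> (\<forall>h\<in>H. \<exists>g\<in>F. ereal (dH h g) < r)"
  proof (cases "Lb = 0")
    case True
    then have "r = \<infinity>" unfolding r_def using \<epsilon> by simp
    then show ?thesis using hne by (intro exI[of _ "{A [z0]}"]) auto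
  next
    case False
    then have Lbp: "0 < Lb" using Lb_nonneg by simp
    then have r: "r = ereal (\<epsilon> / (4 * Lb))" unfolding r_def by simp
    have "\<epsilon> / (4 * Lb) > 0" using Lbp \<epsilon> by simp
    from H_tb[unfolded Hm.mtotally_bounded_def, rule_format, OF this]
    obtain K where K: "finite K" "K \<subseteq> H" "H \<subseteq> (\<Union>x\<in>K. Hm.mball x (\<epsilon> / (4 * Lb)))"
      by blast
    show ?thesis
    proof (intro exI conjI ballI)
      fix h assume "h \<in> H"
      then obtain g where "g \<in> K" "h \<in> Hm.mball g (\<epsilon> / (4 * Lb))" using K by blast
      then show "\<exists>g\<in>K. ereal (dH h g) < r" using Hm.commute r by auto
    qed (use K in auto)
  qed
  define N where "N = covering_number dH H r"
  have "\<exists>k F. finite F \<and> F \<subseteq> H \<and> card F = k \<and> (\<forall>h\<in>H. \<exists>g\<in>F. ereal (dH h g) < r)"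
    using cover_ex by blast
  from LeastI_ex[OF this] obtain F where F: "finite F" "F \<subseteq> H" "card F = N"
      "\<And>h. h \<in> H \<Longrightarrow> \<exists>g\<in>F. ereal (dH h g) < r"
    unfolding N_def covering_number_def by blast
  have closeF: "\<bar>lh h z - lh g z\<bar> \<le> \<epsilon> / 4"
    if "h \<in> H" "g \<in> H" "ereal (dH h g) < r" "z \<in> Zs" for h g z
  proof (cases "Lb = 0")
    case True
    then show ?thesis using liph[OF that(1,2,4)] \<epsilon> by simp
  next
    case False
    then have Lbp: "0 < Lb" using Lb_nonneg by simp
    then have "dH h g < \<epsilon> / (4 * Lb)" using that(3) unfolding r_def by simp
    then have "Lb * dH h g \<le> \<epsilon> / 4" using Lbp by (simp add: field_simps)
    then show ?thesis using liph[OF that(1,2,4)] by linarith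
  qed
  have lhm\<pi>: "lh h \<in> borel_measurable \<pi>" if "h \<in> H" for h
    unfolding measurable_cong_sets[OF \<pi>s refl] by (rule lhmeas[OF that])
  have erclose: "\<bar>er \<pi> lo h - er \<pi> lo g\<bar> \<le> c"
    if hg: "h \<in> H" "g \<in> H" and cl: "\<And>z. z \<in> Zs \<Longrightarrow> \<bar>lh h z - lh g z\<bar> \<le> c" for h g c
  proof -
    have ih: "integrable \<pi> (lh h)"
      by (rule pint_abs(1)[OF \<pi>p lhm\<pi>[OF hg(1)]]) (use lhbd[OF hg(1)] sp\<pi> in auto)
    have ig: "integrable \<pi> (lh g)"
      by (rule pint_abs(1)[OF \<pi>p lhm\<pi>[OF hg(2)]]) (use lhbd[OF hg(2)] sp\<pi> in auto)
    have "er \<pi> lo h - er \<pi> lo g = (\<integral>x. lh h x - lh g x \<partial>\<pi>)"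
      unfolding er_eq using ih ig by simp
    also have "\<bar>\<dots>\<bar> \<le> c"
      by (rule pint_abs(2)[OF \<pi>p]) (use lhm\<pi>[OF hg(1)] lhm\<pi>[OF hg(2)] cl sp\<pi> in auto)
    finally show ?thesis .
  qed
  have ernn: "0 \<le> er \<pi> lo h" if "h \<in> H" for h
    unfolding er_eq by (rule Bochner_Integration.integral_nonneg) (use lhnn[OF that] sp\<pi> in auto)
  have Fne: "F \<noteq> {}" using F(4)[OF hne] by auto
  then have "0 < card F" using F(1) by (simp add: card_gt_0_iff)
  then have N1: "1 \<le> N" using F(3) by simp
  let ?M = "chain_law BZ P \<mu> n"
  let ?\<Omega> = "space (PiM {..<n} (\<lambda>_. BZ))"
  have spM: "space ?M = ?\<Omega>" by (rule mc.space_chain_law)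
  have pM: "prob_space ?M" by (rule mc.prob_space_chain_law)
  have \<omega>Z: "\<omega> i \<in> Zs" if "\<omega> \<in> ?\<Omega>" "i < n" for \<omega> i
    using that spBZ unfolding space_PiM PiE_def Pi_def by auto
  have sumlist: "(\<Sum>z\<leftarrow>map \<omega> [0..<n]. g z) = (\<Sum>i<n. g (\<omega> i))" for \<omega> and g :: "'x \<times> real \<Rightarrow> real"
    by (simp add: interv_sum_list_conv_sum_set_nat atLeast0LessThan comp_def)
  have sample: "map \<omega> [0..<n] \<noteq> [] \<and> set (map \<omega> [0..<n]) \<subseteq> Zs" if "\<omega> \<in> ?\<Omega>" for \<omega>
    using n_pos \<omega>Z[OF that] by auto
  have n0: "0 < real n" using n_pos by simp
  show ?thesis
  proof (cases "N = 1")
    case True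
    then obtain g where Fg: "F = {g}" using F(3) card_1_singletonE by blast
    then have gH: "g \<in> H" using F(2) by auto
    show ?thesis
    proof (intro bexI conjI)
      show "?\<Omega> \<in> sets ?M" by (simp add: mc.sets_chain_law)
      show "1 - \<delta> \<le> measure ?M ?\<Omega>"
        using prob_space.prob_space[OF pM] spM \<delta> by simp
      show "?\<Omega> \<subseteq> {\<omega> \<in> ?\<Omega>. \<bar>er \<pi> lo (A (map \<omega> [0..<n])) - opt \<pi> lo H\<bar> < 5 * \<epsilon>}"
      proof (safe)
        fix \<omega> assume \<omega>: "\<omega> \<in> ?\<Omega>"
        have hs: "A (map \<omega> [0..<n]) \<in> H" using asem sample[OF \<omega>] unfolding ASEM_def by blast
        show "\<bar>er \<pi> lo (A (map \<omega> [0..<n])) - opt \<pi> lo H\<bar> < 5 * \<epsilon>"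
          unfolding opt_def
        proof (rule det1[OF hs gH ernn _ \<epsilon>])
          fix h assume hH: "h \<in> H"
          obtain g' where "g' \<in> F" "ereal (dH h g') < r" using F(4)[OF hH] by blast
          then have "ereal (dH h g) < r" using Fg by simp
          then show "\<bar>er \<pi> lo h - er \<pi> lo g\<bar> \<le> \<epsilon> / 4"
            using erclose[OF hH gH] closeF[OF hH gH] by blast
        qed
      qed
    qed
  next
    case False
    with N1 have N2: "2 \<le> N" by simp
    have Ndpos: "0 < real N / \<delta>" using N2 \<delta> by simp
    have N\<delta>2: "2 \<le> real N / \<delta>"
    proof -
      have "real N \<le> real N / \<delta>" using \<delta> N2 by (simp add: field_simps)
      then show ?thesis using N2 by linarith
    qed
    have lnpos: "0 < ln (2 * real N / \<delta>)" using N\<delta>2 by simp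
    define A' where "A' = (if 0 < a then a else sqrt (real n * \<epsilon>\<^sup>2 / (2 * ln (2 * real N / \<delta>))))"
    have A'pos: "0 < A'" unfolding A'_def using lnpos n0 \<epsilon> by auto
    have aA': "a \<le> A'" unfolding A'_def using a0 A'pos by (auto simp: A'_def)
    have key: "ln (2 * real N / \<delta>) \<le> real n * \<epsilon>\<^sup>2 / (2 * A'\<^sup>2)"
    proof (cases "0 < a")
      case True
      then have A'a: "A' = a" unfolding A'_def by simp
      have Y: "128 * a\<^sup>2 * ln (real N / \<delta>) / \<epsilon>\<^sup>2 \<le> real n"
      proof -
        have "128 * a\<^sup>2 * ln (real N / \<delta>) / \<epsilon>\<^sup>2
            = 128 * C1\<^sup>2 * L\<^sup>2 * ln (real N / \<delta>) / (\<epsilon>\<^sup>2 * (1 - exp (- C2))\<^sup>2)"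
          unfolding a_def q_def using q1 unfolding q_def by (simp add: field_simps power2_eq_square)
        also have "\<dots> \<le> real n" using n_large unfolding N_def r_def by simp
        finally show ?thesis .
      qed
      have "ln (2 * real N / \<delta>) = ln (2 * (real N / \<delta>))" by simp
      also have "\<dots> = ln 2 + ln (real N / \<delta>)" by (rule ln_mult_pos) (use Ndpos in auto)
      also have "\<dots> \<le> 64 * ln (real N / \<delta>)"
      proof -
        have "ln 2 \<le> ln (real N / \<delta>)" using N\<delta>2 by simp
        moreover have "0 \<le> ln (real N / \<delta>)" using N\<delta>2 by simp
        ultimately show ?thesis by linarith
      qed
      also have "\<dots> \<le> real n * \<epsilon>\<^sup>2 / (2 * A'\<^sup>2)"
        using Y True \<epsilon> unfolding A'a by (simp add: field_simps)
      finally show ?thesis .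
    next
      case False
      then have "A'\<^sup>2 = real n * \<epsilon>\<^sup>2 / (2 * ln (2 * real N / \<delta>))"
        unfolding A'_def using lnpos n0 by simp
      then show ?thesis using lnpos n0 \<epsilon> A'pos by (simp add: field_simps)
    qed
    define l where "l = \<epsilon> / A'\<^sup>2"
    have lpos: "0 < l" unfolding l_def using \<epsilon> A'pos by simp
    have expb: "exp (- l * (real n * \<epsilon>) + real n * l\<^sup>2 * A'\<^sup>2 / 2) \<le> \<delta> / (2 * real N)"
    proof -
      have "- l * (real n * \<epsilon>) + real n * l\<^sup>2 * A'\<^sup>2 / 2 = - (real n * \<epsilon>\<^sup>2 / (2 * A'\<^sup>2))"
        unfolding l_def using A'pos by (simp add: field_simps power2_eq_square)
      also have "\<dots> \<le> - ln (2 * real N / \<delta>)" using key by simp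
      finally have "exp (- l * (real n * \<epsilon>) + real n * l\<^sup>2 * A'\<^sup>2 / 2) \<le> exp (- ln (2 * real N / \<delta>))"
        by simp
      also have "\<dots> = \<delta> / (2 * real N)" using Ndpos \<delta> by (simp add: exp_minus)
      finally show ?thesis .
    qed
    define Bad1 where "Bad1 g = {\<omega> \<in> ?\<Omega>. a + real n * \<epsilon> \<le> (\<Sum>i<n. lh g (\<omega> i)) - real n * er \<pi> lo g}" for g
    define Bad2 where "Bad2 g = {\<omega> \<in> ?\<Omega>. a + real n * \<epsilon> \<le> (\<Sum>i<n. - lh g (\<omega> i)) - real n * - er \<pi> lo g}" for g
    have aeq: "L * C1 / (1 - q) = a" unfolding a_def ..
    have bad: "Bad1 g \<in> sets ?M \<and> Bad2 g \<in> sets ?M \<and> measure ?M (Bad1 g) \<le> \<delta> / (2 * real N)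
       \<and> measure ?M (Bad2 g) \<le> \<delta> / (2 * real N)" if gH: "g \<in> H" for g
    proof -
      interpret m1: mchain_f BZ P \<mu> "lh g" "\<bar>lh g z0\<bar> + L * B\<rho>" "er \<pi> lo g" "L * C1" q
        by (rule mf[OF gH])
      interpret m2: mchain_f BZ P \<mu> "\<lambda>z. - lh g z" "\<bar>lh g z0\<bar> + L * B\<rho>" "- er \<pi> lo g" "L * C1" q
        by (rule mf'[OF gH])
      have s1: "Bad1 g \<in> sets ?M"
        unfolding Bad1_def mc.sets_chain_law using m1.sum_meas by measurable
      have s2: "Bad2 g \<in> sets ?M"
        unfolding Bad2_def mc.sets_chain_law using m2.sum_meas by measurable
      have e1: "emeasure ?M (Bad1 g) \<le> ennreal (\<delta> / (2 * real N))"
      proof -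
        have "emeasure ?M (Bad1 g) \<le> ennreal (exp (- l * (real n * \<epsilon>) + real n * l\<^sup>2 * A'\<^sup>2 / 2))"
          using m1.tail[OF n_pos lpos, of A' "real n * \<epsilon>"] aA'
          unfolding Bad1_def m1.a0_def aeq by simp
        also have "\<dots> \<le> ennreal (\<delta> / (2 * real N))" using expb by (rule ennreal_leI)
        finally show ?thesis .
      qed
      have e2: "emeasure ?M (Bad2 g) \<le> ennreal (\<delta> / (2 * real N))"
      proof -
        have "emeasure ?M (Bad2 g) \<le> ennreal (exp (- l * (real n * \<epsilon>) + real n * l\<^sup>2 * A'\<^sup>2 / 2))"
          using m2.tail[OF n_pos lpos, of A' "real n * \<epsilon>"] aA'
          unfolding Bad2_def m2.a0_def aeq by simp
        also have "\<dots> \<le> ennreal (\<delta> / (2 * real N))" using expb by (rule ennreal_leI)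
        finally show ?thesis .
      qed
      have fm: "finite_measure ?M" using pM by (rule prob_space.finite_measure)
      have "measure ?M (Bad1 g) \<le> \<delta> / (2 * real N)"
        using e1 \<delta> N2 by (simp add: finite_measure.emeasure_eq_measure[OF fm] ennreal_le_iff)
      moreover have "measure ?M (Bad2 g) \<le> \<delta> / (2 * real N)"
        using e2 \<delta> N2 by (simp add: finite_measure.emeasure_eq_measure[OF fm] ennreal_le_iff)
      ultimately show ?thesis using s1 s2 by blast
    qed
    define U where "U = (\<Union>g\<in>F. Bad1 g \<union> Bad2 g)"
    have Us: "U \<in> sets ?M" unfolding U_def using bad F(1,2) by blast
    have fm: "finite_measure ?M" using pM by (rule prob_space.finite_measure)
    have "measure ?M U \<le> (\<Sum>g\<in>F. measure ?M (Bad1 g \<union> Bad2 g))"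
      unfolding U_def
      by (rule finite_measure.finite_measure_subadditive_finite[OF fm F(1)]) (use bad F(2) in blast)
    also have "\<dots> \<le> (\<Sum>g\<in>F. \<delta> / (2 * real N) + \<delta> / (2 * real N))"
    proof (rule sum_mono)
      fix g assume "g \<in> F"
      then have gH: "g \<in> H" using F(2) by auto
      have "measure ?M (Bad1 g \<union> Bad2 g) \<le> measure ?M (Bad1 g) + measure ?M (Bad2 g)"
        using bad[OF gH] by (intro measure_Un_le) auto
      then show "measure ?M (Bad1 g \<union> Bad2 g) \<le> \<delta> / (2 * real N) + \<delta> / (2 * real N)"
        using bad[OF gH] by linarith
    qed
    also have "\<dots> = \<delta>" using F(3) N2 by simp
    finally have mU: "measure ?M U \<le> \<delta>" .
    show ?thesis
    proof (intro bexI conjI)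
      show "?\<Omega> - U \<in> sets ?M" using Us by (simp add: mc.sets_chain_law)
      have "measure ?M (?\<Omega> - U) = 1 - measure ?M U"
        using prob_space.prob_compl[OF pM Us] spM by simp
      then show "1 - \<delta> \<le> measure ?M (?\<Omega> - U)" using mU by simp
      show "?\<Omega> - U \<subseteq> {\<omega> \<in> ?\<Omega>. \<bar>er \<pi> lo (A (map \<omega> [0..<n])) - opt \<pi> lo H\<bar> < 5 * \<epsilon>}"
      proof (safe)
        fix \<omega> assume \<omega>: "\<omega> \<in> ?\<Omega>" and nU: "\<omega> \<notin> U"
        let ?zs = "map \<omega> [0..<n]"
        define emp where "emp h = (\<Sum>z\<leftarrow>?zs. loss_h lo h z) / real (length ?zs)" for h
        have emp_eq: "emp h = (\<Sum>i<n. lh h (\<omega> i)) / real n" for h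
          unfolding emp_def lh_def sumlist by simp
        have hs: "A ?zs \<in> H" and asem': "emp (A ?zs) < (INF h\<in>H. emp h) + \<epsilon>"
          using asem sample[OF \<omega>] unfolding ASEM_def emp_def by blast+
        have an: "a / real n \<le> \<epsilon> / 16"
        proof -
          have "16 * a / \<epsilon> = 16 * C1 * L / (\<epsilon> * (1 - exp (- C2)))"
            unfolding a_def q_def by (simp add: field_simps)
          also have "\<dots> \<le> real n" using n_large by simp
          finally have "16 * a \<le> real n * \<epsilon>" using \<epsilon> by (simp add: field_simps)
          then show ?thesis using n0 \<epsilon> by (simp add: field_simps)
        qed
        show "\<bar>er \<pi> lo (A ?zs) - opt \<pi> lo H\<bar> < 5 * \<epsilon>"
          unfolding opt_def
        proof (rule det[OF hs ernn _ asem' _ _ \<epsilon>, where F=F])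
          fix h assume hH: "h \<in> H"
          show "0 \<le> emp h" unfolding emp_eq
            by (intro divide_nonneg_nonneg sum_nonneg lhnn[OF hH] \<omega>Z[OF \<omega>]) auto
          obtain g where gF: "g \<in> F" and dg: "ereal (dH h g) < r" using F(4)[OF hH] by blast
          have gH: "g \<in> H" using gF F(2) by auto
          have "\<bar>emp h - emp g\<bar> \<le> \<epsilon> / 4"
          proof -
            have "\<bar>emp h - emp g\<bar> = \<bar>\<Sum>i<n. (lh h (\<omega> i) - lh g (\<omega> i))\<bar> / real n"
              unfolding emp_eq by (simp add: sum_subtractf diff_divide_distrib[symmetric])
            also have "\<dots> \<le> (\<Sum>i<n. \<bar>lh h (\<omega> i) - lh g (\<omega> i)\<bar>) / real n"
              by (intro divide_right_mono sum_abs) auto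
            also have "\<dots> \<le> (\<Sum>i<n. \<epsilon> / 4) / real n"
              by (intro divide_right_mono sum_mono closeF[OF hH gH dg] \<omega>Z[OF \<omega>]) auto
            also have "\<dots> = \<epsilon> / 4" using n0 by simp
            finally show ?thesis .
          qed
          moreover have "\<bar>er \<pi> lo h - er \<pi> lo g\<bar> \<le> \<epsilon> / 4"
            using erclose[OF hH gH] closeF[OF hH gH dg] by blast
          ultimately show "\<exists>g\<in>F. \<bar>emp h - emp g\<bar> \<le> \<epsilon> / 4 \<and> \<bar>er \<pi> lo h - er \<pi> lo g\<bar> \<le> \<epsilon> / 4"
            using gF by blast
        next
          fix g assume gF: "g \<in> F"
          have "\<omega> \<notin> Bad1 g" "\<omega> \<notin> Bad2 g" using nU gF unfolding U_def by auto
          then have b1: "(\<Sum>i<n. lh g (\<omega> i)) - real n * er \<pi> lo g < a + real n * \<epsilon>"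
            and b2: "- (\<Sum>i<n. lh g (\<omega> i)) + real n * er \<pi> lo g < a + real n * \<epsilon>"
            using \<omega> unfolding Bad1_def Bad2_def by (auto simp: sum_negf)
          have "\<bar>(\<Sum>i<n. lh g (\<omega> i)) - real n * er \<pi> lo g\<bar> < a + real n * \<epsilon>"
            using b1 b2 by linarith
          then have "\<bar>(\<Sum>i<n. lh g (\<omega> i)) - real n * er \<pi> lo g\<bar> / real n < (a + real n * \<epsilon>) / real n"
            using n0 by (simp add: divide_strict_right_mono)
          also have "(a + real n * \<epsilon>) / real n = a / real n + \<epsilon>" using n0 by (simp add: field_simps)
          also have "\<bar>(\<Sum>i<n. lh g (\<omega> i)) - real n * er \<pi> lo g\<bar> / real n = \<bar>emp g - er \<pi> lo g\<bar>"
            unfolding emp_eq using n0 by (simp add: field_simps)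
          finally show "\<bar>emp g - er \<pi> lo g\<bar> < 17 * \<epsilon> / 16" using an by linarith
        qed
      qed
    qed
  qed
qed


end
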